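(* For any configuration $G$, if $G$ is feasible then there exist a patient DRIP $D_{pat}$ and a decision function $f_{pat}$ for $D_{pat}$ such that $(D_{pat},f_{pat})$ is a dedicated leader election algorithm for $G$.
   Context: Model. A configuration is a finite simple undirected connected graph $G$ in which each node $v$ is tagged with a non-negative integer $t_v$ (its wakeup tag); smallest tag $0$, span $\sigma$ = largest tag. Nodes are anonymous and communicate in synchronous global rounds. A node $v$ wakes up in the first global round $r\le t_v$ in which it receives a message, if any, and otherwise in global round $t_v$. Its local clock is $0$ in its wakeup round; it acts from local round $1$ on. In each round a node transmits a message to all neighbours, listens, or terminates. A listening node receives $M$ if exactly one neighbour transmits ($M$), hears collision noise (distinct from silence and messages) if at least two neighbours transmit, and silence otherwise; a transmitting node hears nothing. History $\mathcal H_v[i]$ of $v$ in local round $i\ge0$: $(\emptyset)$ if $v$ transmits or hears silence (or $i=0$ and spontaneous wakeup), $(M)$ if $v$ receives $M$ (or $i=0$ and woken by $M$), $( * )$ on collision. A DRIP is a function $D$ from finite history vectors to $\{\mathit{listen},\mathit{transmit}(M),\mathit{terminate}\}$; node $v$ in local round $i\ge1$ performs $D(\mathcal H_v[0\ldots i-1])$; every node must eventually terminate permanently, $done_v$ being the first local round it terminates. A decision function $f$ for $D$ maps $\mathcal H_v[0\ldots done_v]$ to $\{0,1\}$. $(D,f)$ is a dedicated leader election algorithm for $G$ if, when all nodes of $G$ execute $D$, $f$ outputs $1$ at exactly one node; $G$ is feasible if such a pair exists. A DRIP is patient (for $G$) if, when executed by all nodes of $G$, no node transmits in any of the global rounds $0,\ldots,\sigma$.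 *)

theory Defs
  imports Main
begin

text \<open>Entries of a history: silence (or transmitting, or spontaneous wakeup),
  a received message, or collision noise.\<close>
datatype 'm hentry = Sil | Msg 'm | Coll

datatype 'm action = Listen | Transmit 'm | Terminate

type_synonym 'm drip = "'m hentry list \<Rightarrow> 'm action"

text \<open>Decision function: maps the final history H[0..done] to {0,1}; True encodes 1.\<close>
type_synonym 'm decision = "'m hentry list \<Rightarrow> bool"

text \<open>Local state of an awake node: wakeup (global) round, history so far
  (entries for local rounds 0.. current), terminated flag.\<close>
datatype 'm nstate = NS nat "'m hentry list" bool

text \<open>Configuration: nodes are all elements of a finite type 'v, E the adjacency relation,
  t the wakeup tags.\<close>
definition configuration :: "('v::finite \<Rightarrow> 'v \<Rightarrow> bool) \<Rightarrow> ('v \<Rightarrow> nat) \<Rightarrow> bool" where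
  "configuration E t \<longleftrightarrow>
     (\<forall>u v. E u v \<longrightarrow> E v u) \<and> (\<forall>v. \<not> E v v) \<and>
     (\<forall>u v. (u, v) \<in> {(x, y). E x y}\<^sup>*) \<and> (\<exists>v. t v = 0)"

definition span :: "('v::finite \<Rightarrow> nat) \<Rightarrow> nat" where
  "span t = Max (range t)"

text \<open>Message transmitted by v in the current global round, given the states at the end of
  the previous round (None = v does not transmit).\<close>
definition tx :: "'m drip \<Rightarrow> ('v \<Rightarrow> 'm nstate option) \<Rightarrow> 'v \<Rightarrow> 'm option" where
  "tx D S v = (case S v of
      Some (NS w h False) \<Rightarrow> (case D h of Transmit m \<Rightarrow> Some m | _ \<Rightarrow> None)
    | _ \<Rightarrow> None)"

definition hear :: "('v::finite \<Rightarrow> 'v \<Rightarrow> bool) \<Rightarrow> 'm drip \<Rightarrow> ('v \<Rightarrow> 'm nstate option) \<Rightarrow> 'v \<Rightarrow> 'm hentry" where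
  "hear E D S v = (let T = {u. E v u \<and> tx D S u \<noteq> None} in
      if card T = 0 then Sil
      else if card T = 1 then Msg (the (tx D S (the_elem T)))
      else Coll)"

text \<open>One synchronous global round r.  A terminating node is treated as listening in its
  terminating round (so that H[done] is defined) and does nothing afterwards.\<close>
definition step :: "('v::finite \<Rightarrow> 'v \<Rightarrow> bool) \<Rightarrow> ('v \<Rightarrow> nat) \<Rightarrow> 'm drip \<Rightarrow> nat
                     \<Rightarrow> ('v \<Rightarrow> 'm nstate option) \<Rightarrow> ('v \<Rightarrow> 'm nstate option)" where
  "step E t D r S v = (case S v of
      None \<Rightarrow> (case hear E D S v of
                 Msg m \<Rightarrow> (if r \<le> t v then Some (NS r [Msg m] False) else None)
               | _ \<Rightarrow> (if r = t v then Some (NS r [Sil] False) else None))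
    | Some (NS w h True) \<Rightarrow> Some (NS w h True)
    | Some (NS w h False) \<Rightarrow> (case D h of
          Transmit m \<Rightarrow> Some (NS w (h @ [Sil]) False)
        | Listen \<Rightarrow> Some (NS w (h @ [hear E D S v]) False)
        | Terminate \<Rightarrow> Some (NS w (h @ [hear E D S v]) True)))"

text \<open>run E t D r = states of all nodes at the end of global round r.\<close>
fun run :: "('v::finite \<Rightarrow> 'v \<Rightarrow> bool) \<Rightarrow> ('v \<Rightarrow> nat) \<Rightarrow> 'm drip \<Rightarrow> nat \<Rightarrow> ('v \<Rightarrow> 'm nstate option)" where
  "run E t D 0 = step E t D 0 (\<lambda>_. None)"
| "run E t D (Suc r) = step E t D (Suc r) (run E t D r)"

definition before :: "('v::finite \<Rightarrow> 'v \<Rightarrow> bool) \<Rightarrow> ('v \<Rightarrow> nat) \<Rightarrow> 'm drip \<Rightarrow> nat \<Rightarrow> ('v \<Rightarrow> 'm nstate option)" where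
  "before E t D r = (case r of 0 \<Rightarrow> (\<lambda>_. None) | Suc r' \<Rightarrow> run E t D r')"

definition transmits_in :: "('v::finite \<Rightarrow> 'v \<Rightarrow> bool) \<Rightarrow> ('v \<Rightarrow> nat) \<Rightarrow> 'm drip \<Rightarrow> nat \<Rightarrow> 'v \<Rightarrow> bool" where
  "transmits_in E t D r v \<longleftrightarrow> tx D (before E t D r) v \<noteq> None"

definition terminated_with :: "('v::finite \<Rightarrow> 'v \<Rightarrow> bool) \<Rightarrow> ('v \<Rightarrow> nat) \<Rightarrow> 'm drip \<Rightarrow> 'v \<Rightarrow> 'm hentry list \<Rightarrow> bool" where
  "terminated_with E t D v h \<longleftrightarrow> (\<exists>r w. run E t D r v = Some (NS w h True))"

definition all_terminate :: "('v::finite \<Rightarrow> 'v \<Rightarrow> bool) \<Rightarrow> ('v \<Rightarrow> nat) \<Rightarrow> 'm drip \<Rightarrow> bool" where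
  "all_terminate E t D \<longleftrightarrow> (\<forall>v. \<exists>h. terminated_with E t D v h)"

definition dedicated_LE :: "('v::finite \<Rightarrow> 'v \<Rightarrow> bool) \<Rightarrow> ('v \<Rightarrow> nat) \<Rightarrow> 'm drip \<Rightarrow> 'm decision \<Rightarrow> bool" where
  "dedicated_LE E t D f \<longleftrightarrow> all_terminate E t D \<and>
     (\<exists>!v. \<exists>h. terminated_with E t D v h \<and> f h)"

text \<open>Messages are natural numbers (encoding arbitrary finite messages).\<close>
definition feasible :: "('v::finite \<Rightarrow> 'v \<Rightarrow> bool) \<Rightarrow> ('v \<Rightarrow> nat) \<Rightarrow> bool" where
  "feasible E t \<longleftrightarrow> (\<exists>(D :: nat drip) f. dedicated_LE E t D f)"

definition patient :: "('v::finite \<Rightarrow> 'v \<Rightarrow> bool) \<Rightarrow> ('v \<Rightarrow> nat) \<Rightarrow> 'm drip \<Rightarrow> bool" where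
  "patient E t D \<longleftrightarrow> (\<forall>r \<le> span t. \<forall>v. \<not> transmits_in E t D r v)"

end

theory Submission
  imports Defs
begin

definition sstep :: "nat \<Rightarrow> nat \<Rightarrow> 'm hentry list option \<Rightarrow> 'm hentry \<Rightarrow> 'm hentry list option" where
  "sstep K i acc x = (case acc of Some hs \<Rightarrow> Some (hs @ [x])
     | None \<Rightarrow> (case x of Msg m \<Rightarrow> Some [Msg m] | _ \<Rightarrow> (if i = K then Some [Sil] else None)))"

definition simh :: "nat \<Rightarrow> 'm hentry list \<Rightarrow> 'm hentry list option" where
  "simh K h = snd (foldl (\<lambda>(i, acc) x. (Suc i, sstep K i acc x)) (0, None) h)"

definition pD :: "nat \<Rightarrow> 'm drip \<Rightarrow> 'm drip" where
  "pD K D h = (case simh K h of None \<Rightarrow> Listen | Some hs \<Rightarrow> D hs)"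

definition pf :: "nat \<Rightarrow> 'm decision \<Rightarrow> 'm decision" where
  "pf K f h = (case simh K h of None \<Rightarrow> False | Some hs \<Rightarrow> f hs)"

lemma foldl_fst:
  "fst (foldl (\<lambda>(i, acc) x. (Suc i, sstep K i acc x)) (j, a) h) = j + length h"
  by (induction h arbitrary: j a) auto

lemma simh_Nil: "simh K [] = None"
  by (simp add: simh_def)

lemma simh_snoc: "simh K (h @ [x]) = sstep K (length h) (simh K h) x"
proof -
  let ?F = "(\<lambda>(i, acc) x. (Suc i, sstep K i acc x))"
  obtain a b where ab: "foldl ?F (0, None) h = (a, b)" by fastforce
  have "a = length h" using foldl_fst[of K 0 None h] ab by simp
  moreover have "b = simh K h" using ab unfolding simh_def by simp
  ultimately show ?thesis using ab unfolding simh_def by simp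
qed

lemma simh_rep: "simh K (replicate m (Sil :: 'm hentry)) = (if m \<le> K then None else Some (replicate (m - K) Sil))"
proof (induction m)
  case 0
  then show ?case by (simp add: simh_Nil)
next
  case (Suc m)
  have "simh K (replicate (Suc m) (Sil :: 'm hentry)) = sstep K m (simh K (replicate m (Sil :: 'm hentry))) Sil"
    using simh_snoc[of K "replicate m Sil" Sil] by (simp add: replicate_append_same)
  also have "\<dots> = (if Suc m \<le> K then None else Some (replicate (Suc m - K) Sil))"
  proof (cases "m < K")
    case True
    then have "simh K (replicate m (Sil :: 'm hentry)) = None" using Suc by simp
    then show ?thesis using True by (simp add: sstep_def)
  next
    case False
    show ?thesis
    proof (cases "m = K")
      case True
      then have "simh K (replicate m (Sil :: 'm hentry)) = None" using Suc by simp
      then show ?thesis using True by (simp add: sstep_def)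
    next
      case False2: False
      then have m: "m > K" using False by simp
      then have "simh K (replicate m (Sil :: 'm hentry)) = Some (replicate (m - K) Sil)" using Suc by simp
      moreover have "replicate (m - K) Sil @ [Sil] = replicate (Suc m - K) (Sil :: 'm hentry)"
        using m by (simp add: replicate_append_same Suc_diff_le)
      ultimately show ?thesis using m by (simp add: sstep_def)
    qed
  qed
  finally show ?case .
qed

lemma hear_cong:
  assumes "\<And>u. tx D' S' u = tx D S u"
  shows "hear E D' S' v = hear E D S v"
proof -
  have eq: "tx D' S' = tx D S" using assms by auto
  show ?thesis unfolding hear_def eq by (rule refl)
qed

definition Rel :: "nat \<Rightarrow> ('v \<Rightarrow> nat) \<Rightarrow> nat \<Rightarrow> ('v \<Rightarrow> 'm nstate option) \<Rightarrow> ('v \<Rightarrow> 'm nstate option) \<Rightarrow> bool" where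
  "Rel K t n S' S \<longleftrightarrow> (\<forall>v. (S v = None \<longrightarrow> n < t v \<and> (\<exists>h. S' v = Some (NS (t v) h False) \<and> simh K h = None \<and> length h = n + K + 1 - t v))
     \<and> (\<forall>w hs b. S v = Some (NS w hs b) \<longrightarrow> (\<exists>h. S' v = Some (NS (t v) h b) \<and> simh K h = Some hs)))"

lemma Rel_tx:
  assumes "Rel K t n S' S"
  shows "tx (pD K D) S' u = tx D S u"
proof (cases "S u")
  case None
  with assms obtain h where "S' u = Some (NS (t u) h False)" "simh K h = None"
    unfolding Rel_def by blast
  then show ?thesis using None by (simp add: tx_def pD_def)
next
  case (Some st)
  then obtain w hs b where st: "S u = Some (NS w hs b)" by (cases st) auto
  with assms obtain h where "S' u = Some (NS (t u) h b)" "simh K h = Some hs"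
    unfolding Rel_def by blast
  then show ?thesis using st by (cases b) (simp_all add: tx_def pD_def)
qed

lemma Rel_step:
  assumes R: "Rel K t n S' S" and tK: "\<And>v. t v \<le> K"
  shows "Rel K t (Suc n) (step E t (pD K D) (Suc n + K) S') (step E t D (Suc n) S)"
  unfolding Rel_def
proof (intro allI)
  fix v
  have hr: "hear E (pD K D) S' v = hear E D S v"
    by (rule hear_cong) (rule Rel_tx[OF R])
  {
    assume N: "step E t D (Suc n) S v = None"
    have "Suc n < t v \<and> (\<exists>h. step E t (pD K D) (Suc n + K) S' v = Some (NS (t v) h False) \<and> simh K h = None \<and> length h = Suc n + K + 1 - t v)"
    proof (cases "S v")
      case None
      with R obtain h where h: "n < t v" "S' v = Some (NS (t v) h False)" "simh K h = None" "length h = n + K + 1 - t v"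
        unfolding Rel_def by blast
      have "pD K D h = Listen" using h by (simp add: pD_def)
      then have st': "step E t (pD K D) (Suc n + K) S' v = Some (NS (t v) (h @ [hear E D S v]) False)"
        using h hr by (simp add: step_def)
      show ?thesis
      proof (cases "hear E D S v")
        case (Msg m)
        then show ?thesis using N None h by (simp add: step_def)
      next
        case Sil
        then have "Suc n \<noteq> t v" using N None by (auto simp: step_def)
        moreover have "length h \<noteq> K" using h tK[of v] \<open>Suc n \<noteq> t v\<close> by simp
        ultimately show ?thesis using st' h Sil tK[of v] by (auto simp: simh_snoc sstep_def)
      next
        case Coll
        then have "Suc n \<noteq> t v" using N None by (auto simp: step_def)
        moreover have "length h \<noteq> K" using h tK[of v] \<open>Suc n \<noteq> t v\<close> by simp
        ultimately show ?thesis using st' h Coll tK[of v] by (auto simp: simh_snoc sstep_def)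
      qed
    next
      case (Some st)
      then obtain w hs b where "S v = Some (NS w hs b)" by (cases st) auto
      then show ?thesis using N by (cases b; cases "D hs") (simp_all add: step_def)
    qed
  }
  note c1 = this
  {
    fix w hs b
    assume S1: "step E t D (Suc n) S v = Some (NS w hs b)"
    have "\<exists>h. step E t (pD K D) (Suc n + K) S' v = Some (NS (t v) h b) \<and> simh K h = Some hs"
    proof (cases "S v")
      case None
      with R obtain h where h: "n < t v" "S' v = Some (NS (t v) h False)" "simh K h = None" "length h = n + K + 1 - t v"
        unfolding Rel_def by blast
      have "pD K D h = Listen" using h by (simp add: pD_def)
      then have st': "step E t (pD K D) (Suc n + K) S' v = Some (NS (t v) (h @ [hear E D S v]) False)"
        using h hr by (simp add: step_def)
      show ?thesis
      proof (cases "hear E D S v")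
        case (Msg m)
        then show ?thesis using S1 None h st' by (auto simp: step_def simh_snoc sstep_def split: if_splits)
      next
        case Sil
        then have "Suc n = t v" "hs = [Sil]" "b = False" using S1 None by (auto simp: step_def split: if_splits)
        then show ?thesis using st' h Sil by (auto simp: simh_snoc sstep_def)
      next
        case Coll
        then have "Suc n = t v" "hs = [Sil]" "b = False" using S1 None by (auto simp: step_def split: if_splits)
        then show ?thesis using st' h Coll by (auto simp: simh_snoc sstep_def)
      qed
    next
      case (Some st)
      then obtain w0 hs0 b0 where S0: "S v = Some (NS w0 hs0 b0)" by (cases st) auto
      with R obtain h where h: "S' v = Some (NS (t v) h b0)" "simh K h = Some hs0"
        unfolding Rel_def by blast
      have pd: "pD K D h = D hs0" using h by (simp add: pD_def)
      show ?thesis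
      proof (cases b0)
        case True
        then show ?thesis using S1 S0 h by (simp add: step_def)
      next
        case False
        show ?thesis
        proof (cases "D hs0")
          case Listen
          then show ?thesis using S1 S0 h pd hr False by (auto simp: step_def simh_snoc sstep_def)
        next
          case (Transmit m)
          then show ?thesis using S1 S0 h pd hr False by (auto simp: step_def simh_snoc sstep_def)
        next
          case Terminate
          then show ?thesis using S1 S0 h pd hr False by (auto simp: step_def simh_snoc sstep_def)
        qed
      qed
    qed
  }
note c2 = this
  show "(step E t D (Suc n) S v = None \<longrightarrow> Suc n < t v \<and> (\<exists>h. step E t (pD K D) (Suc n + K) S' v = Some (NS (t v) h False) \<and> simh K h = None \<and> length h = Suc n + K + 1 - t v))
     \<and> (\<forall>w hs b. step E t D (Suc n) S v = Some (NS w hs b) \<longrightarrow> (\<exists>h. step E t (pD K D) (Suc n + K) S' v = Some (NS (t v) h b) \<and> simh K h = Some hs))"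
    using c1 c2 by blast
qed

lemma hear_quiet:
  assumes "\<And>u. tx D S u = None"
  shows "hear E D S v = Sil"
  using assms unfolding hear_def by simp

lemma pre_phase:
  assumes tK: "\<And>v. t v \<le> K"
  shows "r \<le> K \<Longrightarrow> run E t (pD K D) r v = (if t v \<le> r then Some (NS (t v) (replicate (r - t v + 1) (Sil :: 'm hentry)) False) else None)"
proof (induction r arbitrary: v)
  case 0
  have "hear E (pD K D) (\<lambda>_. None :: 'm nstate option) v = Sil"
    by (rule hear_quiet) (simp add: tx_def)
  then show ?case by (simp add: step_def)
next
  case (Suc r)
  let ?S = "run E t (pD K D) r"
  have IH: "\<And>u. ?S u = (if t u \<le> r then Some (NS (t u) (replicate (r - t u + 1) (Sil :: 'm hentry)) False) else None)"
    using Suc by simp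
  have q: "tx (pD K D) ?S u = None" for u
  proof (cases "t u \<le> r")
    case True
    have "r - t u + 1 \<le> K" using Suc.prems True by simp
    then have sN: "simh K (replicate (r - t u + 1) (Sil :: 'm hentry)) = None"
      using simh_rep[of K "r - t u + 1"] by simp
    have "pD K D (replicate (r - t u + 1) (Sil :: 'm hentry)) = Listen"
      unfolding pD_def sN by simp
    then show ?thesis using IH[of u] True by (simp add: tx_def)
  next
    case False
    then show ?thesis using IH[of u] by (simp add: tx_def)
  qed
  have hq: "hear E (pD K D) ?S v = Sil" by (rule hear_quiet) (rule q)
  show ?case
  proof (cases "t v \<le> r")
    case True
    have "r - t v + 1 \<le> K" using Suc.prems True by simp
    then have sN: "simh K (replicate (r - t v + 1) (Sil :: 'm hentry)) = None"
      using simh_rep[of K "r - t v + 1"] by simp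
    have "pD K D (replicate (r - t v + 1) (Sil :: 'm hentry)) = Listen"
      unfolding pD_def sN by simp
    moreover have "replicate (r - t v + 1) (Sil :: 'm hentry) @ [Sil] = replicate (Suc r - t v + 1) Sil"
      using True by (simp add: replicate_append_same Suc_diff_le)
    ultimately show ?thesis using IH[of v] True hq by (simp add: step_def)
  next
    case False
    then show ?thesis using IH[of v] hq by (auto simp: step_def)
  qed
qed

lemma Rel_base:
  fixes D :: "'m drip"
  assumes tK: "\<And>v. t v \<le> K"
  shows "Rel K t 0 (run E t (pD K D) K) (run E t D 0)"
  unfolding Rel_def
proof (intro allI)
  fix v
  have h0: "hear E D (\<lambda>_. None :: 'm nstate option) v = Sil"
    by (rule hear_quiet) (simp add: tx_def)
  have r0: "run E t D 0 v = (if t v = 0 then Some (NS 0 [Sil] False) else None)"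
    using h0 by (simp add: step_def)
  have pp: "run E t (pD K D) K v = Some (NS (t v) (replicate (K - t v + 1) (Sil :: 'm hentry)) False)"
    using pre_phase[OF tK, where r=K and E=E and D=D and v=v] tK[of v] by simp
  show "(run E t D 0 v = None \<longrightarrow> 0 < t v \<and> (\<exists>h. run E t (pD K D) K v = Some (NS (t v) h False) \<and> simh K h = None \<and> length h = 0 + K + 1 - t v))
     \<and> (\<forall>w hs b. run E t D 0 v = Some (NS w hs b) \<longrightarrow> (\<exists>h. run E t (pD K D) K v = Some (NS (t v) h b) \<and> simh K h = Some hs))"
  proof (cases "t v = 0")
    case True
    have "simh K (replicate (K - t v + 1) (Sil :: 'm hentry)) = Some [Sil]"
      using True simh_rep[of K "K - t v + 1"] by simp
    then show ?thesis using r0 pp True by auto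
  next
    case False
    have "simh K (replicate (K - t v + 1) (Sil :: 'm hentry)) = None"
    proof -
      have "K - t v + 1 \<le> K" using False tK[of v] by linarith
      then show ?thesis using simh_rep[of K "K - t v + 1"] by simp
    qed
    then show ?thesis using r0 pp False tK[of v] by auto
  qed
qed

lemma Rel_all:
  assumes tK: "\<And>v. t v \<le> K"
  shows "Rel K t n (run E t (pD K D) (n + K)) (run E t D n)"
proof (induction n)
  case 0
  then show ?case using Rel_base[OF tK] by simp
next
  case (Suc n)
  have "Rel K t (Suc n) (step E t (pD K D) (Suc n + K) (run E t (pD K D) (n + K))) (step E t D (Suc n) (run E t D n))"
    by (rule Rel_step[OF Suc tK])
  then show ?case by simp
qed

lemma persist:
  assumes "run E t D r v = Some (NS w h True)" and "r \<le> r2"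
  shows "run E t D r2 v = Some (NS w h True)"
  using assms(2)
proof (induction r2 rule: dec_induct)
  case base
  then show ?case using assms(1) .
next
  case (step m)
  then show ?case by (simp add: step_def)
qed

lemma Rel_term:
  assumes tK: "\<And>v. t v \<le> K"
    and "run E t D r v = Some (NS w h True)"
  shows "\<exists>h'. run E t (pD K D) (r + K) v = Some (NS (t v) h' True) \<and> simh K h' = Some h"
proof -
  have "Rel K t r (run E t (pD K D) (r + K)) (run E t D r)" by (rule Rel_all[OF tK])
  then show ?thesis using assms(2) unfolding Rel_def by blast
qed



lemma tK_span:
  fixes t :: "'v::finite \<Rightarrow> nat"
  shows "t v \<le> span t"
  unfolding span_def by (rule Max_ge) auto

lemma patient_pD:
  fixes t :: "'v::finite \<Rightarrow> nat" and D :: "'m drip"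
  shows "patient E t (pD (span t) D)"
  unfolding patient_def
proof (intro allI impI)
  fix r v
  assume r: "r \<le> span t"
  show "\<not> transmits_in E t (pD (span t) D) r v"
  proof (cases r)
    case 0
    then show ?thesis by (simp add: transmits_in_def before_def tx_def)
  next
    case (Suc r')
    have st: "run E t (pD (span t) D) r' v = (if t v \<le> r' then Some (NS (t v) (replicate (r' - t v + 1) (Sil :: 'm hentry)) False) else None)"
      using pre_phase[where t=t and K="span t" and r=r' and E=E and D=D and v=v, OF tK_span] Suc r by simp
    show ?thesis
    proof (cases "t v \<le> r'")
      case True
      have "r' - t v + 1 \<le> span t" using Suc r True by simp
      then have sN: "simh (span t) (replicate (r' - t v + 1) (Sil :: 'm hentry)) = None"
        using simh_rep[of "span t" "r' - t v + 1"] by simp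
      have "pD (span t) D (replicate (r' - t v + 1) (Sil :: 'm hentry)) = Listen"
        unfolding pD_def sN by simp
      then show ?thesis using st True Suc by (simp add: transmits_in_def before_def tx_def)
    next
      case False
      then show ?thesis using st Suc by (simp add: transmits_in_def before_def tx_def)
    qed
  qed
qed

theorem lemma9:
  fixes E :: "'v::finite \<Rightarrow> 'v \<Rightarrow> bool" and t :: "'v \<Rightarrow> nat"
  assumes "configuration E t"
    and "feasible E t"
  shows "\<exists>(Dpat :: nat drip) fpat. patient E t Dpat \<and> dedicated_LE E t Dpat fpat"
proof -
  obtain D :: "nat drip" and f where dl: "dedicated_LE E t D f"
    using assms(2) unfolding feasible_def by blast
  define K where "K = span t"
  have tK: "\<And>v. t v \<le> K" unfolding K_def by (rule tK_span)
  let ?D = "pD K D" and ?f = "pf K f"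
  have at: "all_terminate E t D" using dl unfolding dedicated_LE_def by blast
  have fwd: "\<exists>h'. terminated_with E t ?D v h' \<and> simh K h' = Some h"
    if "terminated_with E t D v h" for v h
  proof -
    from that obtain r w where "run E t D r v = Some (NS w h True)"
      unfolding terminated_with_def by blast
    from Rel_term[OF tK this] show ?thesis unfolding terminated_with_def by blast
  qed
  have at': "all_terminate E t ?D"
    unfolding all_terminate_def
  proof
    fix v
    from at obtain h where "terminated_with E t D v h" unfolding all_terminate_def by blast
    from fwd[OF this] show "\<exists>h. terminated_with E t ?D v h" by blast
  qed
  have uniq': "h1 = h2" if "terminated_with E t D' v h1" "terminated_with E t D' v h2" for D' :: "nat drip" and v h1 h2
  proof -
    from that obtain r1 w1 r2 w2 where a: "run E t D' r1 v = Some (NS w1 h1 True)"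
      and b: "run E t D' r2 v = Some (NS w2 h2 True)"
      unfolding terminated_with_def by blast
    have "run E t D' (max r1 r2) v = Some (NS w1 h1 True)" by (rule persist[OF a]) simp
    moreover have "run E t D' (max r1 r2) v = Some (NS w2 h2 True)" by (rule persist[OF b]) simp
    ultimately show ?thesis by simp
  qed
  have eqv: "(\<exists>h'. terminated_with E t ?D v h' \<and> ?f h') \<longleftrightarrow> (\<exists>h. terminated_with E t D v h \<and> f h)" for v
  proof
    assume "\<exists>h'. terminated_with E t ?D v h' \<and> ?f h'"
    then obtain h' where h': "terminated_with E t ?D v h'" "?f h'" by blast
    from at obtain h where h: "terminated_with E t D v h" unfolding all_terminate_def by blast
    from fwd[OF h] obtain h'' where h'': "terminated_with E t ?D v h''" "simh K h'' = Some h" by blast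
    have "h'' = h'" by (rule uniq'[OF h''(1) h'(1)])
    then have "f h" using h'' h'(2) by (simp add: pf_def)
    then show "\<exists>h. terminated_with E t D v h \<and> f h" using h by blast
  next
    assume "\<exists>h. terminated_with E t D v h \<and> f h"
    then obtain h where h: "terminated_with E t D v h" "f h" by blast
    from fwd[OF h(1)] obtain h'' where h'': "terminated_with E t ?D v h''" "simh K h'' = Some h" by blast
    then show "\<exists>h'. terminated_with E t ?D v h' \<and> ?f h'" using h(2) by (auto simp: pf_def)
  qed
  have "\<exists>!v. \<exists>h. terminated_with E t D v h \<and> f h" using dl unfolding dedicated_LE_def by blast
  then have "\<exists>!v. \<exists>h'. terminated_with E t ?D v h' \<and> ?f h'" using eqv by simp
  then have "dedicated_LE E t ?D ?f" using at' unfolding dedicated_LE_def by blast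
  moreover have "patient E t ?D" unfolding K_def by (rule patient_pD)
  ultimately show ?thesis by blast
qed

end
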